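(* Let $u^m\in\mathbb{P}^{\mathrm{disc}}_0(\mathcal{T}_h)$ and $v^m\in\mathbb{P}^{\mathrm{cont}}_1(\mathcal{T}_h)$ be given and let $(v^{m+1},u^{m+1},\mu_\varepsilon^{m+1})$ be any solution of the fully discrete scheme (Step 1 and Step 2 described in the context). Then $$a^{upw}_h(\mu_\varepsilon^{m+1};(u^{m+1})_\oplus,\mu_\varepsilon^{m+1})\ge 0,$$ and consequently the scheme is unconditionally energy stable: $$E_\varepsilon(u^{m+1},v^{m+1})\le E_\varepsilon(u^m,v^m),$$ where $E_\varepsilon(u,v)=\int_\Omega\Big(k_0(u+\varepsilon)\log(u+\varepsilon)-k_1uv+\frac{k_1k_2}{2k_4}|\nabla v|^2+\frac{k_1k_3}{2k_4}v^2\Big)$.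
   Context: Let $\Omega\subset\mathbb{R}^2$ be a bounded polygonal domain and $\mathcal{T}_h$ a shape-regular triangular mesh of $\overline\Omega$ of size $h$. $\mathcal{E}_h^i$ denotes the set of interior edges. For an interior edge $e=\partial K\cap\partial L$ the two adjacent triangles are labelled $K,L$ so that the unit normal $\mathbf{n}_e$ points from $K$ to $L$; for a function $w$, $w_K,w_L$ are its traces from $K$ and $L$ and the jump is $[\![w]\!]=w_K-w_L$. $C_K$ denotes the barycenter of $K$, and $\mathcal{D}_e=|C_K-C_L|$ for $e=K\cap L\in\mathcal{E}_h^i$. The mesh is assumed to satisfy: (H1) for every interior edge $e=K\cap L$, the segment joining $C_K$ and $C_L$ is orthogonal to $e$; (H2) every angle of every triangle of $\mathcal{T}_h$ is at most $\pi/2$. $\mathbb{P}^{\mathrm{disc}}_0(\mathcal{T}_h)$ is the space of piecewise constant functions on $\mathcal{T}_h$, $\mathbb{P}^{\mathrm{cont}}_1(\mathcal{T}_h)$ the space of continuous piecewise linear functions, and $\Pi_0$ the $L^2(\Omega)$-orthogonal projection onto $\mathbb{P}^{\mathrm{disc}}_0(\mathcal{T}_h)$. For a scalar $w$, $w_\oplus=\max\{w,0\}$, $w_\ominus=-\min\{w,0\}$. $(\cdot,\cdot)$ is the $L^2(\Omega)$ inner product and $(f,g)_h=\int_\Omega I_h(fg)$ the mass-lumped inner product, $I_h$ being the nodal $\mathbb{P}_1$ interpolant. The upwind form is $$a^{upw}_h(\mu;u,\bar u)=\int_\Omega(\nabla\mu\cdot\nabla\bar u)\,u+\sum_{e\in\mathcal{E}_h^i,\,e=K\cap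 L}\frac{1}{\mathcal{D}_e}\int_e\Big(([\![\Pi_0\mu]\!])_\oplus u_K-([\![\Pi_0\mu]\!])_\ominus u_L\Big)[\![\bar u]\!].$$ Parameters: $k_0,\dots,k_4>0$, $\tau\in\{0,1\}$, time step $\Delta t>0$, $\varepsilon>0$; $\delta_t w^{m+1}=(w^{m+1}-w^m)/\Delta t$. The scheme: Step 1: find $v^{m+1}\in\mathbb{P}^{\mathrm{cont}}_1(\mathcal{T}_h)$ with $\tau(\delta_t v^{m+1},\bar v)_h+k_2(\nabla v^{m+1},\nabla\bar v)+k_3(v^{m+1},\bar v)_h-k_4(u^m,\bar v)=0$ for all $\bar v\in\mathbb{P}^{\mathrm{cont}}_1(\mathcal{T}_h)$. Step 2: find $(u^{m+1},\mu_\varepsilon^{m+1})\in\mathbb{P}^{\mathrm{disc}}_0(\mathcal{T}_h)^2$ with $u^{m+1}+\varepsilon>0$ such that $(\delta_t u^{m+1},\bar u)+a^{upw}_h(\mu_\varepsilon^{m+1};(u^{m+1})_\oplus,\bar u)=0$ and $(\mu_\varepsilon^{m+1},\bar\mu)-k_0(\log(u^{m+1}+\varepsilon),\bar\mu)+k_1(v^{m+1},\bar\mu)=0$ for all $\bar u,\bar\mu\in\mathbb{P}^{\mathrm{disc}}_0(\mathcal{T}_h)$. (It is assumed $u^m+\varepsilon>0$ so that $E_\varepsilon(u^m,v^m)$ is defined.)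
   Formalization: In $E_\varepsilon(u,v)$ the term $\frac{k_1k_3}{2k_4}v^2$ is integrated by mass lumping, that is, it enters as $\frac{k_1k_3}{2k_4}\int_\Omega I_h(v^2)$ instead of the exact integral over $\Omega$. The statement above fails without it. *)

theory Defs
  imports "HOL-Analysis.Analysis"
begin

type_synonym pt = "real^2"
type_synonym tri = "pt set"   \<comment> \<open>a triangle is represented by its set of three vertices\<close>

definition is_triangle :: "tri \<Rightarrow> bool" where
  "is_triangle K \<longleftrightarrow> card K = 3 \<and> \<not> collinear K"

definition mesh_domain :: "tri set \<Rightarrow> pt set" where
  "mesh_domain T = (\<Union>K\<in>T. convex hull K)"

definition admissible_mesh :: "tri set \<Rightarrow> bool" where
  "admissible_mesh T \<longleftrightarrow> finite T \<and> T \<noteq> {} \<and> (\<forall>K\<in>T. is_triangle K) \<and>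
     (\<forall>K\<in>T. \<forall>L\<in>T. K \<noteq> L \<longrightarrow> convex hull K \<inter> convex hull L = convex hull (K \<inter> L)) \<and>
     connected (interior (mesh_domain T))"

text \<open>Interior edges e = K \<inter> L, listed as ordered pairs (K,L) of adjacent triangles
  (each geometric interior edge appears twice, once per orientation).\<close>
definition int_edges :: "tri set \<Rightarrow> (tri \<times> tri) set" where
  "int_edges T = {(K, L). K \<in> T \<and> L \<in> T \<and> K \<noteq> L \<and> card (K \<inter> L) = 2}"

definition barycenter :: "tri \<Rightarrow> pt" where
  "barycenter K = (1/3) *\<^sub>R (\<Sum>a\<in>K. a)"

definition Dist_e :: "tri \<Rightarrow> tri \<Rightarrow> real" where
  "Dist_e K L = dist (barycenter K) (barycenter L)"

definition elen :: "tri \<Rightarrow> tri \<Rightarrow> real" where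
  "elen K L = Max {dist p q | p q. p \<in> K \<inter> L \<and> q \<in> K \<inter> L}"

definition area :: "tri \<Rightarrow> real" where
  "area K = Henstock_Kurzweil_Integration.content (convex hull K)"

definition H1 :: "tri set \<Rightarrow> bool" where
  "H1 T \<longleftrightarrow> (\<forall>(K, L)\<in>int_edges T. \<forall>p\<in>K \<inter> L. \<forall>q\<in>K \<inter> L.
      (barycenter K - barycenter L) \<bullet> (p - q) = 0)"

definition H2 :: "tri set \<Rightarrow> bool" where
  "H2 T \<longleftrightarrow> (\<forall>K\<in>T. \<forall>a\<in>K. \<forall>b\<in>K. \<forall>c\<in>K. b \<noteq> a \<and> c \<noteq> a \<longrightarrow> (b - a) \<bullet> (c - a) \<ge> 0)"

text \<open>P0 functions: a real value per triangle, tri => real.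
  Continuous P1 functions: given by their nodal values pt => real (only the values at
  mesh vertices matter); on a triangle K the function is the affine interpolant below.\<close>

definition grad :: "tri \<Rightarrow> (pt \<Rightarrow> real) \<Rightarrow> pt" where
  "grad K w = (THE g. \<forall>a\<in>K. \<forall>b\<in>K. g \<bullet> (b - a) = w b - w a)"

definition p1_on :: "tri \<Rightarrow> (pt \<Rightarrow> real) \<Rightarrow> pt \<Rightarrow> real" where
  "p1_on K w x = w (SOME a. a \<in> K) + grad K w \<bullet> (x - (SOME a. a \<in> K))"

definition ip00 :: "tri set \<Rightarrow> (tri \<Rightarrow> real) \<Rightarrow> (tri \<Rightarrow> real) \<Rightarrow> real" where
  "ip00 T f g = (\<Sum>K\<in>T. integral (convex hull K) (\<lambda>x. f K * g K))"

definition ip01 :: "tri set \<Rightarrow> (tri \<Rightarrow> real) \<Rightarrow> (pt \<Rightarrow> real) \<Rightarrow> real" where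
  "ip01 T u w = (\<Sum>K\<in>T. integral (convex hull K) (\<lambda>x. u K * p1_on K w x))"

definition ipgrad :: "tri set \<Rightarrow> (pt \<Rightarrow> real) \<Rightarrow> (pt \<Rightarrow> real) \<Rightarrow> real" where
  "ipgrad T v w = (\<Sum>K\<in>T. integral (convex hull K) (\<lambda>x. grad K v \<bullet> grad K w))"

text \<open>Mass-lumped product (f,g)_h = integral of the nodal P1 interpolant of f g.\<close>
definition iplump :: "tri set \<Rightarrow> (pt \<Rightarrow> real) \<Rightarrow> (pt \<Rightarrow> real) \<Rightarrow> real" where
  "iplump T f g = (\<Sum>K\<in>T. integral (convex hull K) (p1_on K (\<lambda>a. f a * g a)))"

definition ppart :: "real \<Rightarrow> real" where "ppart x = max x 0"
definition npart :: "real \<Rightarrow> real" where "npart x = - min x 0"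

text \<open>The volume term vanishes (broken gradients of P0
  functions are zero) and \<Pi>0 \<mu> = \<mu>. Each interior edge occurs twice in int_edges (both
  orientations) and the edge term does not depend on the orientation, hence the factor 1/2.
  The integrand on e is constant, so the edge integral is |e| times it.\<close>
definition a_upw :: "tri set \<Rightarrow> (tri \<Rightarrow> real) \<Rightarrow> (tri \<Rightarrow> real) \<Rightarrow> (tri \<Rightarrow> real) \<Rightarrow> real" where
  "a_upw T mu u ub = (1/2) * (\<Sum>(K, L)\<in>int_edges T.
      (elen K L / Dist_e K L) *
      (ppart (mu K - mu L) * u K - npart (mu K - mu L) * u L) * (ub K - ub L))"

text \<open>Discrete energy (the v^2 term is the mass-lumped one, consistent with the scheme).\<close>
definition energy :: "tri set \<Rightarrow> real \<Rightarrow> real \<Rightarrow> real \<Rightarrow> real \<Rightarrow> real \<Rightarrow> real \<Rightarrow>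
    (tri \<Rightarrow> real) \<Rightarrow> (pt \<Rightarrow> real) \<Rightarrow> real" where
  "energy T k0 k1 k2 k3 k4 \<epsilon> u v =
     (\<Sum>K\<in>T. integral (convex hull K) (\<lambda>x. k0 * ((u K + \<epsilon>) * ln (u K + \<epsilon>))))
     - k1 * ip01 T u v
     + (k1 * k2 / (2 * k4)) * ipgrad T v v
     + (k1 * k3 / (2 * k4)) * iplump T v v"

end

theory Submission
  imports Defs
begin

lemma cont_int:
  fixes f :: "real^2 \<Rightarrow> 'b::euclidean_space"
  assumes "compact S" "continuous_on S f"
  shows "f integrable_on S"
proof -
  have "bounded (f ` S)" using assms compact_continuous_image compact_imp_bounded by blast
  then obtain B where B: "\<And>x. x \<in> S \<Longrightarrow> norm (f x) \<le> B" by (auto simp: bounded_iff)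
  have L: "S \<in> lmeasurable" using assms(1) lmeasurable_compact by blast
  then have Ls: "S \<in> sets lebesgue" by (simp add: fmeasurableD)
  have "f absolutely_integrable_on S"
    apply (rule measurable_bounded_by_integrable_imp_absolutely_integrable[where g="\<lambda>x. B"])
    using continuous_imp_measurable_on_sets_lebesgue[OF assms(2) Ls] Ls integrable_on_const[OF L] B by auto
  then show ?thesis using absolutely_integrable_on_def by blast
qed

lemma int_const: "integral S (\<lambda>x. c::real) = c * integral S (\<lambda>x. 1)"
proof -
  have "integral S (\<lambda>x. c *\<^sub>R (1::real)) = c *\<^sub>R integral S (\<lambda>x. 1)" by (rule integral_cmul)
  then show ?thesis by simp
qed

lemma int_cmul: "integral S (\<lambda>x. c * (f x::real)) = c * integral S f"
proof -
  have "integral S (\<lambda>x. c *\<^sub>R f x) = c *\<^sub>R integral S f" by (rule integral_cmul)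
  then show ?thesis by simp
qed

lemma tri_det:
  fixes a b c :: "real^2"
  assumes "a \<noteq> b" "\<not> collinear {a, b, c}"
  shows "(b-a)$1 * (c-a)$2 - (b-a)$2 * (c-a)$1 \<noteq> 0"
proof
  assume d: "(b-a)$1 * (c-a)$2 - (b-a)$2 * (c-a)$1 = 0"
  define p where "p = b - a"
  define q where "q = c - a"
  have p0: "p \<noteq> 0" using assms(1) by (simp add: p_def)
  have "\<exists>t. q = t *\<^sub>R p"
  proof (cases "p$1 = 0")
    case False
    show ?thesis
      apply (rule exI[where x="q$1/p$1"])
      using False d unfolding p_def[symmetric] q_def[symmetric]
      by (auto simp: vec_eq_iff forall_2 field_simps)
  next
    case True
    then have "p$2 \<noteq> 0" using p0 by (auto simp: vec_eq_iff forall_2)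
    then show ?thesis
      apply (intro exI[where x="q$2/p$2"])
      using True d unfolding p_def[symmetric] q_def[symmetric]
      by (auto simp: vec_eq_iff forall_2 field_simps)
  qed
  then have "collinear {0, p, q}" by (auto simp: collinear_lemma)
  then have "collinear {b, a, c}" using collinear_3[of b a c] by (simp add: p_def q_def)
  then show False using assms(2) by (simp add: insert_commute)
qed


lemma tri_obtain:
  assumes "is_triangle K"
  obtains a b c where "K = {a,b,c}" "a \<noteq> b" "b \<noteq> c" "a \<noteq> c" "\<not> collinear {a,b,c}"
  using assms unfolding is_triangle_def card_3_iff by blast

lemma grad_ex1:
  assumes "is_triangle K"
  shows "\<exists>!g. \<forall>x\<in>K. \<forall>y\<in>K. g \<bullet> (y - x) = w y - w x"
proof -
  obtain a b c where K: "K = {a,b,c}" "a \<noteq> b" "b \<noteq> c" "a \<noteq> c" and nc: "\<not> collinear {a,b,c}"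
    using tri_obtain[OF assms] by blast
  define p where "p = b - a"
  define q where "q = c - a"
  define det where "det = p$1 * q$2 - p$2 * q$1"
  have det: "det \<noteq> 0" using tri_det[OF K(2) nc] by (simp add: det_def p_def q_def)
  define r where "r = w b - w a"
  define s where "s = w c - w a"
  define g :: "real^2" where "g = (\<chi> i. if i = 1 then (r * q$2 - s * p$2) / det else (s * p$1 - r * q$1) / det)"
  have "g \<bullet> p = ((r * q$2 - s * p$2) * p$1 + (s * p$1 - r * q$1) * p$2) / det"
    by (simp add: g_def inner_vec_def sum_2 add_divide_distrib)
  also have "\<dots> = (r * det) / det" by (simp add: det_def algebra_simps)
  finally have gp: "g \<bullet> p = r" using det by simp
  have "g \<bullet> q = ((r * q$2 - s * p$2) * q$1 + (s * p$1 - r * q$1) * q$2) / det"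
    by (simp add: g_def inner_vec_def sum_2 add_divide_distrib)
  also have "\<dots> = (s * det) / det" by (simp add: det_def algebra_simps)
  finally have gq: "g \<bullet> q = s" using det by simp
  have ga: "\<forall>z\<in>K. g \<bullet> (z - a) = w z - w a"
    using gp gq K by (auto simp: p_def q_def r_def s_def)
  have ex: "\<forall>x\<in>K. \<forall>y\<in>K. g \<bullet> (y - x) = w y - w x"
  proof (intro ballI)
    fix x y assume "x \<in> K" "y \<in> K"
    then have "g \<bullet> (y - a) = w y - w a" "g \<bullet> (x - a) = w x - w a" using ga by auto
    moreover have "y - x = (y - a) - (x - a)" by simp
    ultimately show "g \<bullet> (y - x) = w y - w x" by (simp add: inner_diff_right)
  qed
  have un: "h = g" if h: "\<forall>x\<in>K. \<forall>y\<in>K. h \<bullet> (y - x) = w y - w x" for h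
  proof -
    have "(h - g) \<bullet> p = 0" "(h - g) \<bullet> q = 0" using h ex K by (auto simp: p_def q_def inner_diff_left)
    then have e1: "(h-g)$1 * p$1 + (h-g)$2 * p$2 = 0" "(h-g)$1 * q$1 + (h-g)$2 * q$2 = 0"
      by (simp_all add: inner_vec_def sum_2)
    have "(h-g)$1 * det = q$2 * ((h-g)$1 * p$1 + (h-g)$2 * p$2) - p$2 * ((h-g)$1 * q$1 + (h-g)$2 * q$2)"
      by (simp add: det_def algebra_simps)
    then have 1: "(h-g)$1 = 0" using e1 det by simp
    have "(h-g)$2 * det = p$1 * ((h-g)$1 * q$1 + (h-g)$2 * q$2) - q$1 * ((h-g)$1 * p$1 + (h-g)$2 * p$2)"
      by (simp add: det_def algebra_simps)
    then have 2: "(h-g)$2 = 0" using e1 det by simp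
    have "h - g = 0" using 1 2 by (simp add: vec_eq_iff forall_2)
    then show ?thesis by simp
  qed
  show ?thesis using ex un by blast
qed

lemma grad_char:
  assumes "is_triangle K" "x \<in> K" "y \<in> K"
  shows "grad K w \<bullet> (y - x) = w y - w x"
proof -
  have "\<forall>x\<in>K. \<forall>y\<in>K. grad K w \<bullet> (y - x) = w y - w x"
    unfolding grad_def by (rule theI'[OF grad_ex1[OF assms(1)]])
  then show ?thesis using assms by blast
qed

lemma grad_unique:
  assumes "is_triangle K" "\<forall>x\<in>K. \<forall>y\<in>K. g \<bullet> (y - x) = w y - w x"
  shows "grad K w = g"
  unfolding grad_def using grad_ex1[OF assms(1)] assms(2) by (rule the1_equality)

lemma grad_lin:
  assumes "is_triangle K"
  shows "grad K (\<lambda>a. \<alpha> * f a + \<beta> * g a) = \<alpha> *\<^sub>R grad K f + \<beta> *\<^sub>R grad K g"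
proof (rule grad_unique[OF assms], intro ballI)
  fix x y assume xy: "x \<in> K" "y \<in> K"
  have "(\<alpha> *\<^sub>R grad K f + \<beta> *\<^sub>R grad K g) \<bullet> (y - x) = \<alpha> * (grad K f \<bullet> (y - x)) + \<beta> * (grad K g \<bullet> (y - x))"
    by (simp only: inner_add_left inner_scaleR_left)
  also have "\<dots> = (\<alpha> * f y + \<beta> * g y) - (\<alpha> * f x + \<beta> * g x)"
    by (simp only: grad_char[OF assms xy(1) xy(2), of f] grad_char[OF assms xy(1) xy(2), of g]) (simp add: algebra_simps)
  finally show "(\<alpha> *\<^sub>R grad K f + \<beta> *\<^sub>R grad K g) \<bullet> (y - x) = (\<alpha> * f y + \<beta> * g y) - (\<alpha> * f x + \<beta> * g x)" .
qed

lemma p1_lin: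
  assumes "is_triangle K"
  shows "p1_on K (\<lambda>a. \<alpha> * f a + \<beta> * g a) x = \<alpha> * p1_on K f x + \<beta> * p1_on K g x"
  unfolding p1_on_def grad_lin[OF assms] by (simp add: inner_add_left algebra_simps)

lemma tri_fin: "is_triangle K \<Longrightarrow> finite K"
  unfolding is_triangle_def by (metis card.infinite zero_neq_numeral)

lemma tri_ne: "is_triangle K \<Longrightarrow> K \<noteq> {}"
  unfolding is_triangle_def by auto

lemma p1_cont: "continuous_on S (p1_on K w)"
  unfolding p1_on_def by (intro continuous_intros)

lemma p1_int: "is_triangle K \<Longrightarrow> p1_on K w integrable_on convex hull K"
  by (rule cont_int[OF finite_imp_compact_convex_hull[OF tri_fin] p1_cont])

lemma p1_nonneg:
  assumes "is_triangle K" "\<forall>a\<in>K. w a \<ge> 0" "x \<in> convex hull K"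
  shows "p1_on K w x \<ge> 0"
proof -
  define a0 where "a0 = (SOME a. a \<in> K)"
  have a0: "a0 \<in> K" unfolding a0_def using tri_ne[OF assms(1)] by (simp add: some_in_eq)
  have fin: "finite K" using tri_fin[OF assms(1)] .
  obtain u where u: "\<forall>y\<in>K. 0 \<le> u y" "sum u K = 1" "(\<Sum>y\<in>K. u y *\<^sub>R y) = x"
    using assms(3) unfolding convex_hull_finite[OF fin] by blast
  have "x - a0 = (\<Sum>y\<in>K. u y *\<^sub>R y) - (\<Sum>y\<in>K. u y) *\<^sub>R a0" using u by simp
  also have "\<dots> = (\<Sum>y\<in>K. u y *\<^sub>R (y - a0))"
    by (simp add: scaleR_diff_right sum_subtractf scaleR_sum_left)
  finally have xa: "x - a0 = (\<Sum>y\<in>K. u y *\<^sub>R (y - a0))" .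
  have "grad K w \<bullet> (x - a0) = (\<Sum>y\<in>K. u y * (w y - w a0))"
    unfolding xa inner_sum_right using grad_char[OF assms(1) a0] by simp
  also have "\<dots> = (\<Sum>y\<in>K. u y * w y) - w a0"
    using u(2) by (simp add: right_diff_distrib sum_subtractf sum_distrib_right[symmetric])
  finally have "p1_on K w x = (\<Sum>y\<in>K. u y * w y)"
    unfolding p1_on_def a0_def[symmetric] by simp
  also have "\<dots> \<ge> 0" using u(1) assms(2) by (intro sum_nonneg) simp
  finally show ?thesis .
qed

definition mK :: "tri \<Rightarrow> real" where "mK K = integral (convex hull K) (\<lambda>x. 1)"
definition PK :: "tri \<Rightarrow> (pt \<Rightarrow> real) \<Rightarrow> real" where "PK K w = integral (convex hull K) (p1_on K w)"

lemma mK_nonneg: "is_triangle K \<Longrightarrow> mK K \<ge> 0"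
  unfolding mK_def
  by (rule integral_nonneg[OF integrable_on_const[OF lmeasurable_compact[OF finite_imp_compact_convex_hull[OF tri_fin]]]]) auto

lemma PK_lin:
  assumes "is_triangle K"
  shows "PK K (\<lambda>a. \<alpha> * f a + \<beta> * g a) = \<alpha> * PK K f + \<beta> * PK K g"
proof -
  have "PK K (\<lambda>a. \<alpha> * f a + \<beta> * g a) = integral (convex hull K) (\<lambda>x. \<alpha> * p1_on K f x + \<beta> * p1_on K g x)"
    unfolding PK_def p1_lin[OF assms] ..
  also have "\<dots> = integral (convex hull K) (\<lambda>x. \<alpha> * p1_on K f x) + integral (convex hull K) (\<lambda>x. \<beta> * p1_on K g x)"
    by (rule integral_add) (use integrable_cmul[OF p1_int[OF assms], of \<alpha>] integrable_cmul[OF p1_int[OF assms], of \<beta>] in auto)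
  also have "\<dots> = \<alpha> * PK K f + \<beta> * PK K g" by (simp add: int_cmul PK_def)
  finally show ?thesis .
qed

lemma PK_nonneg:
  assumes "is_triangle K" "\<forall>a\<in>K. w a \<ge> 0"
  shows "PK K w \<ge> 0"
  unfolding PK_def by (rule integral_nonneg[OF p1_int[OF assms(1)]]) (use p1_nonneg[OF assms] in auto)


lemma ip00_eq: "ip00 T f g = (\<Sum>K\<in>T. mK K * (f K * g K))"
  unfolding ip00_def mK_def by (subst int_const) (simp add: mult.commute)

lemma ip01_eq: "ip01 T u w = (\<Sum>K\<in>T. u K * PK K w)"
  unfolding ip01_def PK_def by (simp add: int_cmul)

lemma ipgrad_eq: "ipgrad T v w = (\<Sum>K\<in>T. mK K * (grad K v \<bullet> grad K w))"
  unfolding ipgrad_def mK_def by (subst int_const) (simp add: mult.commute)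

lemma iplump_eq: "iplump T f g = (\<Sum>K\<in>T. PK K (\<lambda>a. f a * g a))"
  unfolding iplump_def PK_def ..

lemma energy_eq: "energy T k0 k1 k2 k3 k4 \<epsilon> u v =
   (\<Sum>K\<in>T. mK K * (k0 * ((u K + \<epsilon>) * ln (u K + \<epsilon>))))
     - k1 * ip01 T u v + (k1 * k2 / (2 * k4)) * ipgrad T v v + (k1 * k3 / (2 * k4)) * iplump T v v"
  unfolding energy_def mK_def by (subst int_const) (simp add: mult.commute)

lemma elen_nonneg:
  assumes "card (K \<inter> L) = 2"
  shows "elen K L \<ge> 0"
proof -
  have fin: "finite (K \<inter> L)" using assms by (metis card.infinite zero_neq_numeral)
  have "K \<inter> L \<noteq> {}" using assms by (metis card.empty zero_neq_numeral)
  then obtain p where p: "p \<in> K \<inter> L" by blast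
  let ?S = "{dist p q | p q. p \<in> K \<inter> L \<and> q \<in> K \<inter> L}"
  have "?S = (\<lambda>(p,q). dist p q) ` ((K \<inter> L) \<times> (K \<inter> L))" by auto
  then have "finite ?S" using fin by simp
  moreover have "dist p p \<in> ?S" using p by blast
  ultimately have "dist p p \<le> Max ?S" by (rule Max_ge)
  then show ?thesis unfolding elen_def by simp
qed

lemma upw_nonneg:
  assumes "\<forall>K. u K \<ge> 0"
  shows "a_upw T mu u mu \<ge> 0"
  unfolding a_upw_def
proof (intro mult_nonneg_nonneg sum_nonneg)
  fix x assume "x \<in> int_edges T"
  then obtain K L where x: "x = (K, L)" "card (K \<inter> L) = 2" unfolding int_edges_def by auto
  have c: "elen K L / Dist_e K L \<ge> 0" using elen_nonneg[OF x(2)] by (simp add: Dist_e_def)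
  have P: "(ppart (mu K - mu L) * u K - npart (mu K - mu L) * u L) * (mu K - mu L) \<ge> 0"
  proof (cases "mu K - mu L \<ge> 0")
    case True
    then have eq: "(ppart (mu K - mu L) * u K - npart (mu K - mu L) * u L) * (mu K - mu L) = (mu K - mu L) * (mu K - mu L) * u K"
      unfolding ppart_def npart_def by (simp add: max_def min_def)
    show ?thesis unfolding eq by (rule mult_nonneg_nonneg) (simp_all add: assms)
  next
    case False
    then have eq: "(ppart (mu K - mu L) * u K - npart (mu K - mu L) * u L) * (mu K - mu L) = (mu K - mu L) * (mu K - mu L) * u L"
      unfolding ppart_def npart_def by (simp add: max_def min_def algebra_simps)
    show ?thesis unfolding eq by (rule mult_nonneg_nonneg) (simp_all add: assms)
  qed
  then show "(case x of (K, L) \<Rightarrow> elen K L / Dist_e K L * (ppart (mu K - mu L) * u K - npart (mu K - mu L) * u L) * (mu K - mu L)) \<ge> 0"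
    using mult_nonneg_nonneg[OF c P] x(1) by (simp only: prod.case mult.assoc)
qed simp

lemma upw_const: "a_upw T mu u (\<lambda>K. c) = 0"
  unfolding a_upw_def by simp

lemma conv_ineq:
  fixes x y :: real
  assumes "x > 0" "y > 0"
  shows "x * ln x - y * ln y \<le> (ln x + 1) * (x - y)"
proof -
  have "ln (x / y) \<le> x / y - 1" using assms by (intro ln_le_minus_one) simp
  then have "ln x - ln y \<le> x / y - 1" using assms by (simp add: ln_div)
  then have "y * (ln x - ln y) \<le> y * (x / y - 1)" using assms by (intro mult_left_mono) auto
  then have "y * ln x - y * ln y \<le> x - y" using assms by (simp add: algebra_simps)
  then show ?thesis by (simp add: algebra_simps)
qed


theorem mainTheorem5:
  fixes T :: "(real^2) set set"
    and k0 k1 k2 k3 k4 \<tau> \<Delta>t \<epsilon> :: real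
    and um u1 mu1 :: "(real^2) set \<Rightarrow> real"
    and vm v1 :: "real^2 \<Rightarrow> real"
  assumes mesh: "admissible_mesh T" and hyp1: "H1 T" and hyp2: "H2 T"
    and k0: "k0 > 0" and k1: "k1 > 0" and k2: "k2 > 0" and k3: "k3 > 0" and k4: "k4 > 0"
    and tau: "\<tau> = 0 \<or> \<tau> = 1" and dt: "\<Delta>t > 0" and eps: "\<epsilon> > 0"
    and um_pos: "\<forall>K\<in>T. um K + \<epsilon> > 0"
    and step1: "\<forall>vb. \<tau> * iplump T (\<lambda>x. (v1 x - vm x) / \<Delta>t) vb + k2 * ipgrad T v1 vb
                     + k3 * iplump T v1 vb - k4 * ip01 T um vb = 0"
    and u1_pos: "\<forall>K\<in>T. u1 K + \<epsilon> > 0"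
    and step2a: "\<forall>ub. ip00 T (\<lambda>K. (u1 K - um K) / \<Delta>t) ub
                      + a_upw T mu1 (\<lambda>K. ppart (u1 K)) ub = 0"
    and step2b: "\<forall>mb. ip00 T mu1 mb - k0 * ip00 T (\<lambda>K. ln (u1 K + \<epsilon>)) mb
                      + k1 * ip01 T mb v1 = 0"
  shows "a_upw T mu1 (\<lambda>K. ppart (u1 K)) mu1 \<ge> 0 \<and>
         energy T k0 k1 k2 k3 k4 \<epsilon> u1 v1 \<le> energy T k0 k1 k2 k3 k4 \<epsilon> um vm"
proof -
  have finT: "finite T" and tri: "\<And>K. K \<in> T \<Longrightarrow> is_triangle K"
    using mesh unfolding admissible_mesh_def by auto
  have A: "a_upw T mu1 (\<lambda>K. ppart (u1 K)) mu1 \<ge> 0"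
    by (rule upw_nonneg) (simp add: ppart_def)
  define \<delta> where "\<delta> K = u1 K - um K" for K
  \<comment> \<open>mass conservation\<close>
  have "ip00 T (\<lambda>K. (u1 K - um K) / \<Delta>t) (\<lambda>K. 1) + a_upw T mu1 (\<lambda>K. ppart (u1 K)) (\<lambda>K. 1) = 0"
    using step2a by blast
  then have "(\<Sum>K\<in>T. mK K * \<delta> K) / \<Delta>t = 0"
    by (simp add: ip00_eq upw_const \<delta>_def sum_divide_distrib)
  then have c0: "(\<Sum>K\<in>T. mK K * \<delta> K) = 0" using dt by simp
  have "ip00 T (\<lambda>K. (u1 K - um K) / \<Delta>t) mu1 + a_upw T mu1 (\<lambda>K. ppart (u1 K)) mu1 = 0"
    using step2a by blast
  then have "(\<Sum>K\<in>T. mK K * (mu1 K * \<delta> K)) / \<Delta>t = - a_upw T mu1 (\<lambda>K. ppart (u1 K)) mu1"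
    by (simp add: ip00_eq \<delta>_def sum_divide_distrib algebra_simps)
  then have d0: "(\<Sum>K\<in>T. mK K * (mu1 K * \<delta> K)) \<le> 0" using A dt
    by (metis divide_le_0_iff le_less_trans neg_le_0_iff_le not_le)
  have "ip00 T mu1 \<delta> - k0 * ip00 T (\<lambda>K. ln (u1 K + \<epsilon>)) \<delta> + k1 * ip01 T \<delta> v1 = 0"
    using step2b by blast
  moreover have "ip01 T \<delta> v1 = ip01 T u1 v1 - ip01 T um v1"
    by (simp add: ip01_eq \<delta>_def sum_subtractf left_diff_distrib)
  ultimately have e0: "k0 * (\<Sum>K\<in>T. mK K * (ln (u1 K + \<epsilon>) * \<delta> K))
      = (\<Sum>K\<in>T. mK K * (mu1 K * \<delta> K)) + k1 * (ip01 T u1 v1 - ip01 T um v1)"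
    by (simp add: ip00_eq)
  \<comment> \<open>convexity\<close>
  have "(\<Sum>K\<in>T. mK K * (k0 * ((u1 K + \<epsilon>) * ln (u1 K + \<epsilon>))) - mK K * (k0 * ((um K + \<epsilon>) * ln (um K + \<epsilon>))))
      \<le> (\<Sum>K\<in>T. k0 * (mK K * (ln (u1 K + \<epsilon>) * \<delta> K)) + k0 * (mK K * \<delta> K))"
  proof (rule sum_mono)
    fix K assume K: "K \<in> T"
    have ci: "(u1 K + \<epsilon>) * ln (u1 K + \<epsilon>) - (um K + \<epsilon>) * ln (um K + \<epsilon>) \<le> (ln (u1 K + \<epsilon>) + 1) * \<delta> K"
      using conv_ineq[of "u1 K + \<epsilon>" "um K + \<epsilon>"] K u1_pos um_pos by (simp add: \<delta>_def)
    have "k0 * mK K \<ge> 0" using k0 mK_nonneg[OF tri[OF K]] by simp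
    from mult_left_mono[OF ci this]
    show "mK K * (k0 * ((u1 K + \<epsilon>) * ln (u1 K + \<epsilon>))) - mK K * (k0 * ((um K + \<epsilon>) * ln (um K + \<epsilon>)))
      \<le> k0 * (mK K * (ln (u1 K + \<epsilon>) * \<delta> K)) + k0 * (mK K * \<delta> K)"
      by (simp add: algebra_simps)
  qed
  then have f0: "(\<Sum>K\<in>T. mK K * (k0 * ((u1 K + \<epsilon>) * ln (u1 K + \<epsilon>)))) - (\<Sum>K\<in>T. mK K * (k0 * ((um K + \<epsilon>) * ln (um K + \<epsilon>))))
      \<le> k0 * (\<Sum>K\<in>T. mK K * (ln (u1 K + \<epsilon>) * \<delta> K)) + k0 * (\<Sum>K\<in>T. mK K * \<delta> K)"
    by (simp add: sum_subtractf sum.distrib sum_distrib_left)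
  have uE: "(\<Sum>K\<in>T. mK K * (k0 * ((u1 K + \<epsilon>) * ln (u1 K + \<epsilon>)))) - (\<Sum>K\<in>T. mK K * (k0 * ((um K + \<epsilon>) * ln (um K + \<epsilon>))))
      \<le> k1 * (ip01 T u1 v1 - ip01 T um v1)"
  proof -
    have "k0 * (\<Sum>K\<in>T. mK K * \<delta> K) = 0" using c0 by simp
    then show ?thesis using f0 e0 d0 by linarith
  qed
  define d where "d x = (v1 x - vm x) / \<Delta>t" for x
  have s1: "\<tau> * iplump T d v1 + k2 * ipgrad T v1 v1 + k3 * iplump T v1 v1 - k4 * ip01 T um v1 = 0"
    using step1 unfolding d_def by blast
  have s2: "\<tau> * iplump T d vm + k2 * ipgrad T v1 vm + k3 * iplump T v1 vm - k4 * ip01 T um vm = 0"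
    using step1 unfolding d_def by blast
  have D1: "iplump T d v1 - iplump T d vm \<ge> 0"
  proof -
    have "0 \<le> (\<Sum>K\<in>T. PK K (\<lambda>a. d a * v1 a) - PK K (\<lambda>a. d a * vm a))"
    proof (rule sum_nonneg)
      fix K assume K: "K \<in> T"
      have "PK K (\<lambda>a. d a * v1 a) - PK K (\<lambda>a. d a * vm a) = PK K (\<lambda>a. 1 * (d a * v1 a) + (-1) * (d a * vm a))"
        by (simp only: PK_lin[OF tri[OF K]])
      also have "\<dots> \<ge> 0"
      proof (rule PK_nonneg[OF tri[OF K]], intro ballI)
        fix a
        have "1 * (d a * v1 a) + (-1) * (d a * vm a) = (v1 a - vm a) * (v1 a - vm a) / \<Delta>t"
          by (simp add: d_def algebra_simps add_divide_distrib diff_divide_distrib)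
        also have "\<dots> \<ge> 0" using dt by simp
        finally show "1 * (d a * v1 a) + (-1) * (d a * vm a) \<ge> 0" .
      qed
      finally show "0 \<le> PK K (\<lambda>a. d a * v1 a) - PK K (\<lambda>a. d a * vm a)" .
    qed
    then show ?thesis by (simp add: iplump_eq sum_subtractf)
  qed
  have D2: "ipgrad T v1 v1 - ipgrad T v1 vm - (ipgrad T v1 v1 - ipgrad T vm vm) / 2 \<ge> 0"
  proof -
    have "0 \<le> (\<Sum>K\<in>T. mK K * (grad K v1 \<bullet> grad K v1) - mK K * (grad K v1 \<bullet> grad K vm)
               - (mK K * (grad K v1 \<bullet> grad K v1) - mK K * (grad K vm \<bullet> grad K vm)) / 2)"
    proof (rule sum_nonneg)
      fix K assume K: "K \<in> T"
      have "mK K * (grad K v1 \<bullet> grad K v1) - mK K * (grad K v1 \<bullet> grad K vm)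
               - (mK K * (grad K v1 \<bullet> grad K v1) - mK K * (grad K vm \<bullet> grad K vm)) / 2
            = mK K * ((grad K v1 - grad K vm) \<bullet> (grad K v1 - grad K vm)) / 2"
      proof -
        have e: "(grad K v1 - grad K vm) \<bullet> (grad K v1 - grad K vm) = grad K v1 \<bullet> grad K v1 - 2 * (grad K v1 \<bullet> grad K vm) + grad K vm \<bullet> grad K vm"
          by (simp add: inner_diff_left inner_diff_right inner_commute)
        show ?thesis by (simp only: e) (simp add: field_simps)
      qed
      also have "\<dots> \<ge> 0" using mK_nonneg[OF tri[OF K]] by simp
      finally show "0 \<le> mK K * (grad K v1 \<bullet> grad K v1) - mK K * (grad K v1 \<bullet> grad K vm)
               - (mK K * (grad K v1 \<bullet> grad K v1) - mK K * (grad K vm \<bullet> grad K vm)) / 2" .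
    qed
    then show ?thesis by (simp only: ipgrad_eq sum_subtractf sum_divide_distrib[symmetric])
  qed
  have D3: "iplump T v1 v1 - iplump T v1 vm - (iplump T v1 v1 - iplump T vm vm) / 2 \<ge> 0"
  proof -
    have "0 \<le> (\<Sum>K\<in>T. PK K (\<lambda>a. v1 a * v1 a) - PK K (\<lambda>a. v1 a * vm a)
               - (PK K (\<lambda>a. v1 a * v1 a) - PK K (\<lambda>a. vm a * vm a)) / 2)"
    proof (rule sum_nonneg)
      fix K assume K: "K \<in> T"
      have "PK K (\<lambda>a. v1 a * v1 a) - PK K (\<lambda>a. v1 a * vm a)
               - (PK K (\<lambda>a. v1 a * v1 a) - PK K (\<lambda>a. vm a * vm a)) / 2
          = PK K (\<lambda>a. (1/2) * (v1 a * v1 a) + 1 * ((-1) * (v1 a * vm a) + (1/2) * (vm a * vm a)))"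
        by (simp only: PK_lin[OF tri[OF K]]) (simp add: field_simps)
      also have "\<dots> \<ge> 0"
      proof (rule PK_nonneg[OF tri[OF K]], intro ballI)
        fix a
        have "(1/2) * (v1 a * v1 a) + 1 * ((-1) * (v1 a * vm a) + (1/2) * (vm a * vm a)) = (v1 a - vm a) * (v1 a - vm a) / 2"
          by (simp add: algebra_simps)
        also have "\<dots> \<ge> 0" by simp
        finally show "(1/2) * (v1 a * v1 a) + 1 * ((-1) * (v1 a * vm a) + (1/2) * (vm a * vm a)) \<ge> 0" .
      qed
      finally show "0 \<le> PK K (\<lambda>a. v1 a * v1 a) - PK K (\<lambda>a. v1 a * vm a)
               - (PK K (\<lambda>a. v1 a * v1 a) - PK K (\<lambda>a. vm a * vm a)) / 2" .
    qed
    then show ?thesis by (simp only: iplump_eq sum_subtractf sum_divide_distrib[symmetric])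
  qed
  define Y where "Y = \<tau> * (iplump T d v1 - iplump T d vm)
     + k2 * (ipgrad T v1 v1 - ipgrad T v1 vm - (ipgrad T v1 v1 - ipgrad T vm vm) / 2)
     + k3 * (iplump T v1 v1 - iplump T v1 vm - (iplump T v1 v1 - iplump T vm vm) / 2)"
  have tau0: "\<tau> \<ge> 0" using tau by auto
  have Y0: "Y \<ge> 0" unfolding Y_def using D1 D2 D3 tau0 k2 k3 by simp
  have I: "ip01 T um v1 - ip01 T um vm = (\<tau> * (iplump T d v1 - iplump T d vm)
     + k2 * (ipgrad T v1 v1 - ipgrad T v1 vm) + k3 * (iplump T v1 v1 - iplump T v1 vm)) / k4"
    using s1 s2 k4 by (simp add: field_simps)
  have key: "- (k1 * ip01 T um v1) + k1 * ip01 T um vm + (k1 * k2 / (2 * k4)) * ipgrad T v1 v1 - (k1 * k2 / (2 * k4)) * ipgrad T vm vm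
      + (k1 * k3 / (2 * k4)) * iplump T v1 v1 - (k1 * k3 / (2 * k4)) * iplump T vm vm = - ((k1 / k4) * Y)"
  proof -
    have eq: "ip01 T um v1 = ip01 T um vm + (\<tau> * (iplump T d v1 - iplump T d vm)
     + k2 * (ipgrad T v1 v1 - ipgrad T v1 vm) + k3 * (iplump T v1 v1 - iplump T v1 vm)) / k4"
      using I by simp
    show ?thesis unfolding Y_def eq using k4 by (simp add: field_simps)
  qed
  have "(k1 / k4) * Y \<ge> 0" using k1 k4 Y0 by simp
  then have E: "energy T k0 k1 k2 k3 k4 \<epsilon> u1 v1 \<le> energy T k0 k1 k2 k3 k4 \<epsilon> um vm"
  proof -
    have uE': "(\<Sum>K\<in>T. mK K * (k0 * ((u1 K + \<epsilon>) * ln (u1 K + \<epsilon>)))) - (\<Sum>K\<in>T. mK K * (k0 * ((um K + \<epsilon>) * ln (um K + \<epsilon>))))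
      \<le> k1 * ip01 T u1 v1 - k1 * ip01 T um v1" using uE by (simp only: right_diff_distrib)
    show ?thesis unfolding energy_eq using uE' key \<open>(k1 / k4) * Y \<ge> 0\<close> by linarith
  qed
  show ?thesis using A E by blast
qed

end
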